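(* Let $P$ be a $d$-polytope with symbolic slack matrix $S_P(\mathbf x)$, slack ideal $I_P\subset\mathbb{C}[\mathbf x]$ and non-incidence toric ideal $T_P\subset\mathbb{C}[\mathbf x]$ (all defined in the context). Then $P$ is morally $2$-level if and only if $I_P\subseteq T_P$.
   Context: Let $P\subset\mathbb{R}^d$ be a $d$-dimensional polytope with labelled vertices $\mathbf p_1,\dots,\mathbf p_v$ and labelled facets $F_1,\dots,F_f$. The support (zero pattern) of a slack matrix of $P$ is the $v\times f$ pattern whose $(i,j)$ entry is zero iff $\mathbf p_i\in F_j$. The symbolic slack matrix $S_P(\mathbf x)$ is the $v\times f$ matrix with a $0$ in entry $(i,j)$ if $\mathbf p_i\in F_j$ and a distinct variable $x_{ij}$ otherwise; let $x_1,\dots,x_t$ denote all these variables and $\mathbb{C}[\mathbf x]=\mathbb{C}[x_1,\dots,x_t]$. The slack ideal is $I_P=\langle (d+2)\text{-minors of } S_P(\mathbf x)\rangle : (x_1\cdots x_t)^\infty$, and the slack variety is $\mathcal V(I_P)\subseteq\mathbb{C}^t$; a point $\mathbf s\in\mathbb{C}^t$ is identified with the matrix $S_P(\mathbf s)$. $S_P(\mathbbm{1})$ denotes the $0/1$ matrix obtained by setting every variable to $1$. $P$ is called morally $2$-level if $S_P(\mathbbm 1)\in\mathcal V(I_P)$. The non-incidence graph $G_P$ is the bipartite graph on the vertices and facets of $P$ with an edge $\{\mathbf p_i,F_j\}$ iff $\mathbf p_i\notin F_j$; its edges are thus labelled by the variables $x_{ij}$. $T_P$ is the toric ideal of the vertex-edge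 incidence matrix of $G_P$, i.e. the kernel of the $\mathbb{C}$-algebra map $\mathbb{C}[\mathbf x]\to\mathbb{C}[s_1^{\pm1},\dots,s_v^{\pm1},u_1^{\pm1},\dots,u_f^{\pm1}]$, $x_{ij}\mapsto s_iu_j$. *)

theory Defs
  imports "HOL-Analysis.Analysis" "HOL-Library.Poly_Mapping" "Jordan_Normal_Form.Determinant"
begin

type_synonym 'v cpoly = "('v \<Rightarrow>\<^sub>0 nat) \<Rightarrow>\<^sub>0 complex"

definition PVar :: "'v \<Rightarrow> 'v cpoly" where
  "PVar v = Poly_Mapping.single (Poly_Mapping.single v 1) 1"

definition PConst :: "complex \<Rightarrow> 'v cpoly" where
  "PConst c = Poly_Mapping.single 0 c"

definition polys :: "'v set \<Rightarrow> 'v cpoly set" where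
  "polys X = {f. \<forall>m \<in> Poly_Mapping.keys f. Poly_Mapping.keys m \<subseteq> X}"

definition peval :: "('v \<Rightarrow> complex) \<Rightarrow> 'v cpoly \<Rightarrow> complex" where
  "peval a f = (\<Sum>m \<in> Poly_Mapping.keys f. Poly_Mapping.lookup f m * (\<Prod>v \<in> Poly_Mapping.keys m. a v ^ Poly_Mapping.lookup m v))"

definition psubst :: "('v \<Rightarrow> 'w cpoly) \<Rightarrow> 'v cpoly \<Rightarrow> 'w cpoly" where
  "psubst g f = (\<Sum>m \<in> Poly_Mapping.keys f. PConst (Poly_Mapping.lookup f m) * (\<Prod>v \<in> Poly_Mapping.keys m. g v ^ Poly_Mapping.lookup m v))"

definition gen_ideal :: "'v set \<Rightarrow> 'v cpoly set \<Rightarrow> 'v cpoly set" where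
  "gen_ideal X G = {f. \<exists>A r. finite A \<and> A \<subseteq> G \<and> (\<forall>g\<in>A. r g \<in> polys X) \<and>
                          f = (\<Sum>g\<in>A. r g * g)}"

definition saturation :: "'v set \<Rightarrow> 'v cpoly set \<Rightarrow> 'v cpoly \<Rightarrow> 'v cpoly set" where
  "saturation X I h = {f \<in> polys X. \<exists>N::nat. h ^ N * f \<in> I}"

definition poly_vertices :: "'a::euclidean_space set \<Rightarrow> 'a set" where
  "poly_vertices P = {p. p extreme_point_of P}"

definition poly_facets :: "'a::euclidean_space set \<Rightarrow> 'a set set" where
  "poly_facets P = {F. F facet_of P}"

definition slack_vars :: "(nat \<Rightarrow> 'a) \<Rightarrow> (nat \<Rightarrow> 'a set) \<Rightarrow> nat \<Rightarrow> nat \<Rightarrow> (nat \<times> nat) set" where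
  "slack_vars pv pf nv nf = {(i, j). i < nv \<and> j < nf \<and> pv i \<notin> pf j}"

definition sym_slack :: "(nat \<Rightarrow> 'a) \<Rightarrow> (nat \<Rightarrow> 'a set) \<Rightarrow> nat \<Rightarrow> nat \<Rightarrow> (nat \<times> nat) cpoly" where
  "sym_slack pv pf i j = (if pv i \<in> pf j then 0 else PVar (i, j))"

definition slack_minors :: "(nat \<Rightarrow> 'a) \<Rightarrow> (nat \<Rightarrow> 'a set) \<Rightarrow> nat \<Rightarrow> nat \<Rightarrow> nat \<Rightarrow> (nat \<times> nat) cpoly set" where
  "slack_minors pv pf nv nf k =
     {det (mat k k (\<lambda>(a, b). sym_slack pv pf (r a) (c b))) | r c.
        inj_on r {..<k} \<and> r ` {..<k} \<subseteq> {..<nv} \<and> inj_on c {..<k} \<and> c ` {..<k} \<subseteq> {..<nf}}"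

definition slack_ideal :: "(nat \<Rightarrow> 'a) \<Rightarrow> (nat \<Rightarrow> 'a set) \<Rightarrow> nat \<Rightarrow> nat \<Rightarrow> nat \<Rightarrow> (nat \<times> nat) cpoly set" where
  "slack_ideal pv pf nv nf d =
     (let X = slack_vars pv pf nv nf in
       saturation X (gen_ideal X (slack_minors pv pf nv nf (d + 2))) (\<Prod>v\<in>X. PVar v))"

text \<open>Toric ideal T_P of the non-incidence graph: kernel of x_ij \<mapsto> s_i u_j on C[x]
  (s_i = variable Inl i, u_j = variable Inr j).\<close>
definition nonincidence_toric_ideal :: "(nat \<Rightarrow> 'a) \<Rightarrow> (nat \<Rightarrow> 'a set) \<Rightarrow> nat \<Rightarrow> nat \<Rightarrow> (nat \<times> nat) cpoly set" where
  "nonincidence_toric_ideal pv pf nv nf =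
     {f \<in> polys (slack_vars pv pf nv nf).
        psubst (\<lambda>(i, j). PVar (Inl i) * PVar (Inr j) :: (nat + nat) cpoly) f = 0}"

text \<open>Morally 2-level: S_P(1) lies in the slack variety V(I_P).\<close>
definition morally_2_level :: "(nat \<Rightarrow> 'a) \<Rightarrow> (nat \<Rightarrow> 'a set) \<Rightarrow> nat \<Rightarrow> nat \<Rightarrow> nat \<Rightarrow> bool" where
  "morally_2_level pv pf nv nf d = (\<forall>f \<in> slack_ideal pv pf nv nf d. peval (\<lambda>_. 1) f = 0)"

end

theory Submission
  imports Defs
begin


definition chi :: "('v \<Rightarrow> 'b::comm_ring_1) \<Rightarrow> ('v \<Rightarrow>\<^sub>0 nat) \<Rightarrow> 'b" where
  "chi h m = (\<Prod>v\<in>Poly_Mapping.keys m. h v ^ Poly_Mapping.lookup m v)"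

lemma chi_superset:
  assumes "finite S" "Poly_Mapping.keys m \<subseteq> S"
  shows "chi h m = (\<Prod>v\<in>S. h v ^ Poly_Mapping.lookup m v)"
  unfolding chi_def
  by (rule prod.mono_neutral_left) (use assms in \<open>auto simp: in_keys_iff\<close>)

lemma chi_add: "chi h (m + m') = chi h m * chi h m'"
proof -
  let ?S = "Poly_Mapping.keys m \<union> Poly_Mapping.keys m'"
  have "chi h (m + m') = (\<Prod>v\<in>?S. h v ^ Poly_Mapping.lookup (m + m') v)"
    by (rule chi_superset) (auto dest: subsetD[OF keys_add])
  also have "\<dots> = (\<Prod>v\<in>?S. h v ^ Poly_Mapping.lookup m v) * (\<Prod>v\<in>?S. h v ^ Poly_Mapping.lookup m' v)"
    by (simp add: lookup_add power_add prod.distrib)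
  also have "\<dots> = chi h m * chi h m'"
    by (simp add: chi_superset[symmetric])
  finally show ?thesis .
qed

lemma chi_zero[simp]: "chi h 0 = 1"
  by (simp add: chi_def)

lemma chi_single1[simp]: "chi h (Poly_Mapping.single v 1) = h v"
  by (simp add: chi_def)

definition geval :: "(complex \<Rightarrow> 'b::comm_ring_1) \<Rightarrow> ('v \<Rightarrow> 'b) \<Rightarrow> 'v cpoly \<Rightarrow> 'b" where
  "geval c h f = (\<Sum>m\<in>Poly_Mapping.keys f. c (Poly_Mapping.lookup f m) * chi h m)"

lemma geval_superset:
  assumes "comm_ring_hom c" "finite S" "Poly_Mapping.keys f \<subseteq> S"
  shows "geval c h f = (\<Sum>m\<in>S. c (Poly_Mapping.lookup f m) * chi h m)"
proof -
  interpret c: comm_ring_hom c by fact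
  show ?thesis unfolding geval_def
    by (rule sum.mono_neutral_left) (use assms in \<open>auto simp: in_keys_iff\<close>)
qed

lemma geval_add:
  assumes "comm_ring_hom c"
  shows "geval c h (f + g) = geval c h f + geval c h g"
proof -
  interpret c: comm_ring_hom c by fact
  let ?S = "Poly_Mapping.keys f \<union> Poly_Mapping.keys g"
  have "geval c h (f + g) = (\<Sum>m\<in>?S. c (Poly_Mapping.lookup (f + g) m) * chi h m)"
    by (rule geval_superset[OF assms]) (auto dest: subsetD[OF keys_add])
  also have "\<dots> = (\<Sum>m\<in>?S. c (Poly_Mapping.lookup f m) * chi h m) + (\<Sum>m\<in>?S. c (Poly_Mapping.lookup g m) * chi h m)"
    by (simp add: lookup_add c.hom_add distrib_right sum.distrib)
  also have "\<dots> = geval c h f + geval c h g"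
    by (simp add: geval_superset[OF assms, symmetric])
  finally show ?thesis .
qed

lemma geval_zero[simp]: "geval c h 0 = 0"
  by (simp add: geval_def)

lemma geval_single:
  assumes "comm_ring_hom c"
  shows "geval c h (Poly_Mapping.single m a) = c a * chi h m"
proof -
  interpret c: comm_ring_hom c by fact
  show ?thesis by (simp add: geval_def)
qed

lemma geval_sum:
  assumes "comm_ring_hom c"
  shows "geval c h (sum F A) = (\<Sum>x\<in>A. geval c h (F x))"
  by (induction A rule: infinite_finite_induct) (simp_all add: geval_add[OF assms])

lemma poly_mapping_expand:
  "f = (\<Sum>m\<in>Poly_Mapping.keys f. Poly_Mapping.single m (Poly_Mapping.lookup f m))"
proof (rule poly_mapping_eqI)
  fix k
  show "Poly_Mapping.lookup f k = Poly_Mapping.lookup (\<Sum>m\<in>Poly_Mapping.keys f. Poly_Mapping.single m (Poly_Mapping.lookup f m)) k"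
    by (simp add: lookup_sum lookup_single when_def in_keys_iff)
qed

lemma geval_mult:
  assumes "comm_ring_hom c"
  shows "geval c h (f * g) = geval c h f * geval c h g"
proof -
  interpret c: comm_ring_hom c by fact
  let ?F = "Poly_Mapping.keys f" and ?G = "Poly_Mapping.keys g"
  have "f * g = (\<Sum>m\<in>?F. Poly_Mapping.single m (Poly_Mapping.lookup f m)) * (\<Sum>m\<in>?G. Poly_Mapping.single m (Poly_Mapping.lookup g m))"
    using poly_mapping_expand[of f] poly_mapping_expand[of g] by simp
  also have "\<dots> = (\<Sum>m\<in>?F. \<Sum>m'\<in>?G. Poly_Mapping.single (m + m') (Poly_Mapping.lookup f m * Poly_Mapping.lookup g m'))"
    by (simp add: sum_product mult_single)
  finally have "geval c h (f * g) = (\<Sum>m\<in>?F. \<Sum>m'\<in>?G. c (Poly_Mapping.lookup f m) * chi h m * (c (Poly_Mapping.lookup g m') * chi h m'))"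
    by (simp add: geval_sum[OF assms] geval_single[OF assms] chi_add c.hom_mult mult_ac)
  also have "\<dots> = geval c h f * geval c h g"
    by (simp add: geval_def sum_product)
  finally show ?thesis .
qed

lemma geval_one:
  assumes "comm_ring_hom c"
  shows "geval c h 1 = 1"
proof -
  interpret c: comm_ring_hom c by fact
  show ?thesis using geval_single[OF assms, of h 0 1] by simp
qed

lemma geval_hom:
  assumes "comm_ring_hom c"
  shows "comm_ring_hom (geval c h)"
  by unfold_locales (simp_all add: geval_add[OF assms] geval_mult[OF assms] geval_one[OF assms])

lemma id_hom: "comm_ring_hom (\<lambda>x::complex. x)"
  by unfold_locales simp_all

lemma PConst_hom: "comm_ring_hom (PConst :: complex \<Rightarrow> 'v cpoly)"
  by unfold_locales (simp_all add: PConst_def single_add mult_single)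

lemma peval_geval: "peval a = geval (\<lambda>x. x) a"
  by (simp add: fun_eq_iff peval_def geval_def chi_def)

lemma psubst_geval: "psubst g = geval PConst g"
  by (simp add: fun_eq_iff psubst_def geval_def chi_def)

lemma peval_hom: "comm_ring_hom (peval a)"
  unfolding peval_geval by (rule geval_hom[OF id_hom])

lemma psubst_hom: "comm_ring_hom (psubst g)"
  unfolding psubst_geval by (rule geval_hom[OF PConst_hom])

lemma peval_PConst[simp]: "peval a (PConst x) = x"
  unfolding peval_geval PConst_def by (simp add: geval_single[OF id_hom] chi_def)

lemma peval_PVar[simp]: "peval a (PVar v) = a v"
  unfolding peval_geval PVar_def by (simp add: geval_single[OF id_hom] chi_def)

lemma psubst_PVar[simp]: "psubst g (PVar v) = g v"
  unfolding psubst_geval PVar_def by (simp add: geval_single[OF PConst_hom] PConst_def chi_def)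

lemma peval_psubst: "peval a (psubst g f) = peval (\<lambda>v. peval a (g v)) f"
proof -
  interpret pa: comm_ring_hom "peval a" by (rule peval_hom)
  have "peval a (psubst g f) = (\<Sum>m\<in>Poly_Mapping.keys f. peval a (PConst (Poly_Mapping.lookup f m)) *
     (\<Prod>v\<in>Poly_Mapping.keys m. peval a (g v) ^ Poly_Mapping.lookup m v))"
    by (simp only: psubst_def pa.hom_sum pa.hom_mult pa.hom_prod pa.hom_power)
  also have "\<dots> = peval (\<lambda>v. peval a (g v)) f"
    by (simp only: peval_PConst peval_def[of "\<lambda>v. peval a (g v)" f])
  finally show ?thesis .
qed



lemma polys_iff: "f \<in> polys X \<longleftrightarrow> (\<forall>m\<in>Poly_Mapping.keys f. Poly_Mapping.keys m \<subseteq> X)"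
  by (simp add: polys_def)

lemma polys_add: "f \<in> polys X \<Longrightarrow> g \<in> polys X \<Longrightarrow> f + g \<in> polys X"
  unfolding polys_iff using keys_add[of f g] by blast

lemma polys_mult: "f \<in> polys X \<Longrightarrow> g \<in> polys X \<Longrightarrow> f * g \<in> polys X"
  unfolding polys_iff
proof
  fix m assume f: "\<forall>m\<in>Poly_Mapping.keys f. Poly_Mapping.keys m \<subseteq> X"
    and g: "\<forall>m\<in>Poly_Mapping.keys g. Poly_Mapping.keys m \<subseteq> X"
    and m: "m \<in> Poly_Mapping.keys (f * g)"
  then obtain a b where "m = a + b" "a \<in> Poly_Mapping.keys f" "b \<in> Poly_Mapping.keys g"
    using keys_mult[of f g] by blast
  then show "Poly_Mapping.keys m \<subseteq> X" using f g keys_add[of a b] by blast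
qed

lemma polys_single0: "Poly_Mapping.single 0 c \<in> polys X"
  by (simp add: polys_iff)

lemma polys_zero: "0 \<in> polys X"
  by (simp add: polys_iff)

lemma polys_one: "1 \<in> polys X"
  by (simp add: polys_iff)

lemma polys_of_int: "of_int n \<in> polys X"
  using polys_single0[of "of_int n" X] by simp

lemma polys_PVar: "v \<in> X \<Longrightarrow> PVar v \<in> polys X"
  by (simp add: polys_iff PVar_def)

lemma polys_sum: "(\<And>x. x \<in> A \<Longrightarrow> F x \<in> polys X) \<Longrightarrow> sum F A \<in> polys X"
  by (induction A rule: infinite_finite_induct) (simp_all add: polys_zero polys_add)

lemma polys_prod: "(\<And>x. x \<in> A \<Longrightarrow> F x \<in> polys X) \<Longrightarrow> prod F A \<in> polys X"
  by (induction A rule: infinite_finite_induct) (simp_all add: polys_one polys_mult)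

lemma polys_det:
  assumes "\<And>i j. i < dim_row M \<Longrightarrow> j < dim_col M \<Longrightarrow> M $$ (i, j) \<in> polys X"
  shows "det M \<in> polys X"
proof -
  have "(\<Prod>i = 0..<dim_row M. M $$ (i, p i)) \<in> polys X" if "p permutes {0..<dim_row M}" "dim_row M = dim_col M" for p
  proof (rule polys_prod)
    fix i assume "i \<in> {0..<dim_row M}"
    then have "i < dim_row M" "p i < dim_col M" using that permutes_in_image[OF that(1)] by auto
    then show "M $$ (i, p i) \<in> polys X" by (rule assms)
  qed
  then show ?thesis
    unfolding det_def by (auto intro!: polys_sum polys_mult polys_of_int simp: polys_zero)
qed

lemma det_scale:
  fixes x y :: "nat \<Rightarrow> 'b::comm_ring_1"
  shows "det (mat k k (\<lambda>(a, b). x a * y b * e (a, b))) = (\<Prod>a=0..<k. x a) * (\<Prod>b=0..<k. y b) * det (mat k k e)"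
proof -
  have "(\<Prod>i = 0..<k. x i * y (p i) * e (i, p i)) = (\<Prod>a=0..<k. x a) * (\<Prod>b=0..<k. y b) * (\<Prod>i = 0..<k. e (i, p i))"
    if "p permutes {0..<k}" for p
  proof -
    have "(\<Prod>b=0..<k. y b) = (\<Prod>i=0..<k. y (p i))"
      using prod.permute[OF that, of y] by (simp add: comp_def)
    then show ?thesis by (simp add: prod.distrib)
  qed
  moreover have "p permutes {0..<k} \<Longrightarrow> i < k \<Longrightarrow> p i < k" for p i
    using permutes_in_image by fastforce
  ultimately show ?thesis
    unfolding det_def by (auto simp: sum_distrib_left mult_ac intro!: sum.cong prod.cong)
qed

lemma single1_mult_zero:
  fixes F :: "'w cpoly"
  assumes "Poly_Mapping.single M 1 * F = 0"
  shows "F = 0"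
proof (rule poly_mapping_eqI)
  fix k
  have "Poly_Mapping.single M 1 * F = (\<Sum>m\<in>Poly_Mapping.keys F. Poly_Mapping.single (M + m) (Poly_Mapping.lookup F m))"
    by (subst poly_mapping_expand[of F]) (simp add: sum_distrib_left mult_single)
  then have "Poly_Mapping.lookup (Poly_Mapping.single M 1 * F) (M + k) = Poly_Mapping.lookup F k"
    by (simp add: lookup_sum lookup_single when_def in_keys_iff)
  then show "Poly_Mapping.lookup F k = Poly_Mapping.lookup 0 k" using assms by simp
qed

definition is_mono :: "'w cpoly \<Rightarrow> bool" where
  "is_mono q \<longleftrightarrow> (\<exists>M. q = Poly_Mapping.single M 1)"

lemma is_mono_mult: "is_mono p \<Longrightarrow> is_mono q \<Longrightarrow> is_mono (p * q)"
  unfolding is_mono_def by (auto simp: mult_single)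

lemma is_mono_one: "is_mono 1"
  unfolding is_mono_def by (metis single_one)

lemma is_mono_prod: "(\<And>x. x \<in> A \<Longrightarrow> is_mono (F x)) \<Longrightarrow> is_mono (prod F A)"
  by (induction A rule: infinite_finite_induct) (simp_all add: is_mono_one is_mono_mult)

lemma is_mono_power: "is_mono p \<Longrightarrow> is_mono (p ^ n)"
  by (induction n) (simp_all add: is_mono_one is_mono_mult)

lemma is_mono_PVar: "is_mono (PVar v)"
  unfolding is_mono_def PVar_def by blast

lemma is_mono_mult_zero: "is_mono p \<Longrightarrow> p * F = 0 \<Longrightarrow> F = 0"
  unfolding is_mono_def using single1_mult_zero by blast



definition GG :: "nat \<times> nat \<Rightarrow> (nat + nat) cpoly" where
  "GG = (\<lambda>(i, j). PVar (Inl i) * PVar (Inr j))"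

lemma psubst_sym_slack:
  "psubst GG (sym_slack pv pf i j) = PVar (Inl i) * PVar (Inr j) * PConst (peval (\<lambda>_. 1) (sym_slack pv pf i j))"
proof -
  interpret ps: comm_ring_hom "psubst GG" by (rule psubst_hom)
  interpret pe: comm_ring_hom "peval (\<lambda>_. 1) :: (nat \<times> nat) cpoly \<Rightarrow> complex" by (rule peval_hom)
  have "PConst 0 = (0 :: (nat + nat) cpoly)" "PConst 1 = (1 :: (nat + nat) cpoly)"
    by (simp_all add: PConst_def)
  then show ?thesis
    by (cases "pv i \<in> pf j") (simp add: sym_slack_def, simp add: sym_slack_def GG_def)
qed

lemma psubst_minor:
  fixes r c :: "nat \<Rightarrow> nat" and k :: nat and pv :: "nat \<Rightarrow> 'x" and pf :: "nat \<Rightarrow> 'x set"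
  defines "M \<equiv> mat k k (\<lambda>(a, b). sym_slack pv pf (r a) (c b))"
  shows "psubst GG (det M) = (\<Prod>a=0..<k. PVar (Inl (r a))) * (\<Prod>b=0..<k. PVar (Inr (c b))) * PConst (peval (\<lambda>_. 1) (det M))"
proof -
  interpret ps: comm_ring_hom "psubst GG" by (rule psubst_hom)
  interpret pe: comm_ring_hom "peval (\<lambda>_. 1)" by (rule peval_hom)
  interpret pc: comm_ring_hom "PConst :: complex \<Rightarrow> (nat + nat) cpoly" by (rule PConst_hom)
  have "map_mat (psubst GG) M = mat k k (\<lambda>(a, b). PVar (Inl (r a)) * PVar (Inr (c b)) *
          (\<lambda>(a,b). PConst (peval (\<lambda>_. 1) (sym_slack pv pf (r a) (c b)))) (a, b))"
    unfolding M_def by (rule eq_matI) (auto simp: psubst_sym_slack)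
  then have "psubst GG (det M) = (\<Prod>a=0..<k. PVar (Inl (r a))) * (\<Prod>b=0..<k. PVar (Inr (c b))) *
     det (mat k k (\<lambda>(a,b). PConst (peval (\<lambda>_. 1) (sym_slack pv pf (r a) (c b)))))"
    using det_scale[where x="\<lambda>a. PVar (Inl (r a))" and y="\<lambda>b. PVar (Inr (c b))"
       and e="\<lambda>(a,b). PConst (peval (\<lambda>_. 1) (sym_slack pv pf (r a) (c b)))" and k=k]
    by (simp add: ps.hom_det[symmetric])
  also have "mat k k (\<lambda>(a,b). PConst (peval (\<lambda>_. 1) (sym_slack pv pf (r a) (c b)))) = map_mat PConst (map_mat (peval (\<lambda>_. 1)) M)"
    unfolding M_def by (rule eq_matI) auto
  also have "det \<dots> = PConst (peval (\<lambda>_. 1) (det M))"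
    using comm_ring_hom.hom_det[OF PConst_hom, of "map_mat (peval (\<lambda>_. 1)) M"] pe.hom_det[of M] by simp
  finally show ?thesis .
qed

theorem theorem3p6:
  fixes P :: "'a::euclidean_space set"
    and pv :: "nat \<Rightarrow> 'a" and pf :: "nat \<Rightarrow> 'a set" and nv nf :: nat
  assumes "polytope P"
    and "aff_dim P = int DIM('a)"
    and "bij_betw pv {..<nv} (poly_vertices P)"
    and "bij_betw pf {..<nf} (poly_facets P)"
  shows "morally_2_level pv pf nv nf DIM('a) \<longleftrightarrow>
         slack_ideal pv pf nv nf DIM('a) \<subseteq> nonincidence_toric_ideal pv pf nv nf"
proof -
  define X where "X = slack_vars pv pf nv nf"
  define h where "h = (\<Prod>v\<in>X. PVar v :: (nat \<times> nat) cpoly)"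
  define Mi where "Mi = slack_minors pv pf nv nf (DIM('a) + 2)"
  have SI: "slack_ideal pv pf nv nf DIM('a) = saturation X (gen_ideal X Mi) h"
    by (simp add: slack_ideal_def X_def h_def Mi_def Let_def)
  have T: "nonincidence_toric_ideal pv pf nv nf = {f \<in> polys X. psubst GG f = 0}"
    by (simp add: nonincidence_toric_ideal_def X_def GG_def)
  interpret ps: comm_ring_hom "psubst GG" by (rule psubst_hom)
  show ?thesis
  proof
    assume m2: "morally_2_level pv pf nv nf DIM('a)"
    have mz: "psubst GG g = 0" if g: "g \<in> Mi" for g
    proof -
      obtain r c where gdef: "g = det (mat (DIM('a) + 2) (DIM('a) + 2) (\<lambda>(a, b). sym_slack pv pf (r a) (c b)))"
        and rc: "r ` {..<DIM('a) + 2} \<subseteq> {..<nv}" "c ` {..<DIM('a) + 2} \<subseteq> {..<nf}"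
        using g unfolding Mi_def slack_minors_def by blast
      have "g \<in> polys X"
        unfolding gdef
      proof (rule polys_det)
        fix i j assume "i < dim_row (mat (DIM('a) + 2) (DIM('a) + 2) (\<lambda>(a, b). sym_slack pv pf (r a) (c b)))"
          "j < dim_col (mat (DIM('a) + 2) (DIM('a) + 2) (\<lambda>(a, b). sym_slack pv pf (r a) (c b)))"
        then have ij: "i < DIM('a) + 2" "j < DIM('a) + 2" by auto
        then have "r i < nv" "c j < nf" using rc by auto
        then show "mat (DIM('a) + 2) (DIM('a) + 2) (\<lambda>(a, b). sym_slack pv pf (r a) (c b)) $$ (i, j) \<in> polys X"
          using ij by (auto simp: sym_slack_def polys_zero X_def slack_vars_def intro!: polys_PVar)
      qed
      moreover have "g \<in> gen_ideal X Mi"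
        unfolding gen_ideal_def
        by (rule CollectI, rule exI[of _ "{g}"], rule exI[of _ "\<lambda>_. 1"]) (use g in \<open>simp add: polys_one\<close>)
      ultimately have "g \<in> slack_ideal pv pf nv nf DIM('a)"
        unfolding SI saturation_def by (auto intro!: exI[of _ 0])
      then have "peval (\<lambda>_. 1) g = 0" using m2 unfolding morally_2_level_def by blast
      then show ?thesis unfolding gdef by (simp add: psubst_minor PConst_def)
    qed
    show "slack_ideal pv pf nv nf DIM('a) \<subseteq> nonincidence_toric_ideal pv pf nv nf"
    proof
      fix f assume "f \<in> slack_ideal pv pf nv nf DIM('a)"
      then obtain N A r where f: "f \<in> polys X" and A: "A \<subseteq> Mi"
        and eq: "h ^ N * f = (\<Sum>g\<in>A. r g * g)"
        unfolding SI saturation_def gen_ideal_def by blast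
      have "psubst GG (h ^ N * f) = (\<Sum>g\<in>A. psubst GG (r g) * psubst GG g)"
        unfolding eq by (simp add: ps.hom_sum ps.hom_mult)
      also have "\<dots> = 0" using A mz by (auto intro!: sum.neutral)
      finally have "psubst GG h ^ N * psubst GG f = 0" by (simp add: ps.hom_mult ps.hom_power)
      moreover have "is_mono (psubst GG h ^ N)"
        unfolding h_def ps.hom_prod
        by (intro is_mono_power is_mono_prod) (auto simp: GG_def intro!: is_mono_mult is_mono_PVar)
      ultimately have "psubst GG f = 0" using is_mono_mult_zero by blast
      with f show "f \<in> nonincidence_toric_ideal pv pf nv nf" unfolding T by blast
    qed
  next
    assume sub: "slack_ideal pv pf nv nf DIM('a) \<subseteq> nonincidence_toric_ideal pv pf nv nf"
    show "morally_2_level pv pf nv nf DIM('a)"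
      unfolding morally_2_level_def
    proof
      interpret pe: comm_ring_hom "peval (\<lambda>_. 1)" by (rule peval_hom)
      fix f assume "f \<in> slack_ideal pv pf nv nf DIM('a)"
      then have "psubst GG f = 0" using sub unfolding T by blast
      have one: "(\<lambda>v. peval (\<lambda>_. 1) (GG v)) = (\<lambda>_. 1)"
        by (auto simp: fun_eq_iff GG_def pe.hom_mult)
      have "peval (\<lambda>_. 1) f = peval (\<lambda>_. 1) (psubst GG f)"
        by (simp add: peval_psubst one)
      also have "\<dots> = 0" using \<open>psubst GG f = 0\<close> by simp
      finally show "peval (\<lambda>_. 1) f = 0" .
    qed
  qed
qed

end
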